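(* For every sufficiently large integer $m$ there exist two curves $\sigma,\tau$ of complexity $m$ with vertices in $\mathbb{R}$ such that the only traversal realizing $d_{DTW}(\sigma,\tau)$ has length $2m-5$, and for every $k\le m-3$ there exists a traversal realizing $d_{k\text{-}DTW}(\sigma,\tau)$ of length $m+1$.
   Context: For curves $\sigma=(v_1,\dots,v_{m'})$, $\tau=(w_1,\dots,w_{m''})$, a traversal $T$ is a sequence of index pairs starting with $(1,1)$, ending with $(m',m'')$, each $(i,j)$ followed only by $(i+1,j)$, $(i,j+1)$ or $(i+1,j+1)$; its length is its number of pairs. $d_{DTW}(\sigma,\tau)=\min_T\sum_{(i,j)\in T}|v_i-w_j|$. With $s^{(T)}_1\ge s^{(T)}_2\ge\dots$ the matched distances sorted non-increasingly (zeros beyond $|T|$), $d_{k\text{-}DTW}(\sigma,\tau)=\min_T\sum_{l=1}^k s^{(T)}_l$. A traversal realizes a distance if it attains the minimum. *)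

theory Defs
  imports Complex_Main
begin

text \<open>Curves are lists of real vertices; index pairs are 1-based as in the paper:
  the pair (i,j) matches vertex i of sigma (sigma ! (i-1)) with vertex j of tau.\<close>

definition trav_step :: "nat \<times> nat \<Rightarrow> nat \<times> nat \<Rightarrow> bool" where
  "trav_step p q \<longleftrightarrow>
     q = (fst p + 1, snd p) \<or> q = (fst p, snd p + 1) \<or> q = (fst p + 1, snd p + 1)"

definition is_traversal :: "real list \<Rightarrow> real list \<Rightarrow> (nat \<times> nat) list \<Rightarrow> bool" where
  "is_traversal \<sigma> \<tau> T \<longleftrightarrow>
     T \<noteq> [] \<and> hd T = (1, 1) \<and> last T = (length \<sigma>, length \<tau>) \<and>
     (\<forall>i. i + 1 < length T \<longrightarrow> trav_step (T ! i) (T ! (i + 1)))"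

definition matched_dists :: "real list \<Rightarrow> real list \<Rightarrow> (nat \<times> nat) list \<Rightarrow> real list" where
  "matched_dists \<sigma> \<tau> T = map (\<lambda>(i, j). \<bar>\<sigma> ! (i - 1) - \<tau> ! (j - 1)\<bar>) T"

definition dtw_cost :: "real list \<Rightarrow> real list \<Rightarrow> (nat \<times> nat) list \<Rightarrow> real" where
  "dtw_cost \<sigma> \<tau> T = sum_list (matched_dists \<sigma> \<tau> T)"

definition kdtw_cost :: "nat \<Rightarrow> real list \<Rightarrow> real list \<Rightarrow> (nat \<times> nat) list \<Rightarrow> real" where
  "kdtw_cost k \<sigma> \<tau> T = sum_list (take k (rev (sort (matched_dists \<sigma> \<tau> T))))"

definition d_DTW :: "real list \<Rightarrow> real list \<Rightarrow> real" where
  "d_DTW \<sigma> \<tau> = Min {dtw_cost \<sigma> \<tau> T | T. is_traversal \<sigma> \<tau> T}"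

definition d_kDTW :: "nat \<Rightarrow> real list \<Rightarrow> real list \<Rightarrow> real" where
  "d_kDTW k \<sigma> \<tau> = Min {kdtw_cost k \<sigma> \<tau> T | T. is_traversal \<sigma> \<tau> T}"

definition realizes_DTW :: "real list \<Rightarrow> real list \<Rightarrow> (nat \<times> nat) list \<Rightarrow> bool" where
  "realizes_DTW \<sigma> \<tau> T \<longleftrightarrow> is_traversal \<sigma> \<tau> T \<and> dtw_cost \<sigma> \<tau> T = d_DTW \<sigma> \<tau>"

definition realizes_kDTW :: "nat \<Rightarrow> real list \<Rightarrow> real list \<Rightarrow> (nat \<times> nat) list \<Rightarrow> bool" where
  "realizes_kDTW k \<sigma> \<tau> T \<longleftrightarrow> is_traversal \<sigma> \<tau> T \<and> kdtw_cost k \<sigma> \<tau> T = d_kDTW k \<sigma> \<tau>"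

end

theory Submission
  imports Defs
begin


definition sg :: "nat \<Rightarrow> nat \<Rightarrow> real" where
  "sg n i = (if i = 1 then 0 else if i \<le> n+1 then 2 else if i = n+2 then 0 else if i = n+3 then 1
             else if i = n+4 then 0 else 1)"
definition tg :: "nat \<Rightarrow> nat \<Rightarrow> real" where
  "tg n j = (if j \<le> n then 1 else if j = n+1 then 0 else if j = n+2 then 2 else if j = n+3 then 0
             else if j = n+4 then 2 else 0)"
definition sig :: "nat \<Rightarrow> real list" where "sig n = 0 # replicate n 2 @ [0,1,0,1]"
definition tau :: "nat \<Rightarrow> real list" where "tau n = replicate n 1 @ [0,2,0,2,0]"

lemma sig_nth: assumes "1 \<le> i" "i \<le> n+5" shows "sig n ! (i-1) = sg n i"
proof -
  consider "i = 1" | "2 \<le> i \<and> i \<le> n+1" | "i = n+2" | "i = n+3" | "i = n+4" | "i = n+5"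
    using assms by linarith
  then show ?thesis
  proof cases
    case 2
    define d where "d = i - 2"
    have d: "i = d + 2" "d < n" using 2 by (auto simp: d_def)
    then show ?thesis using 2 by (simp add: sig_def sg_def nth_append)
  qed (auto simp: sig_def sg_def nth_append)
qed

lemma tau_nth: assumes "1 \<le> j" "j \<le> n+5" shows "tau n ! (j-1) = tg n j"
proof -
  consider "j \<le> n" | "j = n+1" | "j = n+2" | "j = n+3" | "j = n+4" | "j = n+5"
    using assms by linarith
  then show ?thesis
    by cases (use assms in \<open>auto simp: tau_def tg_def nth_append\<close>)
qed

definition ind :: "real \<Rightarrow> real" where "ind x = (if 1 \<le> x then 1 else 0)"

definition w :: "nat \<Rightarrow> nat \<Rightarrow> nat \<Rightarrow> real" where "w n i j = \<bar>sg n i - tg n j\<bar>"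

definition g :: "nat \<Rightarrow> nat \<Rightarrow> nat \<Rightarrow> real" where
  "g n i j = (if j \<le> n then (if i \<le> n+2 then real (max i j) else if i = n+3 then real n + 2 else real n + 3)
   else real n + (if i = 1 then [0,1,1,2,2] else if i \<le> n+1 then [1,0,1,1,2] else if i = n+2 then [1,1,0,1,1]
     else if i = n+3 then [2,2,1,1,2] else if i = n+4 then [2,3,1,2,1] else [3,3,2,2,2]) ! (j - n - 1))"

lemma rows: "1 \<le> (i::nat) \<Longrightarrow> i \<le> n+5 \<Longrightarrow> i = 1 \<or> (2 \<le> i \<and> i \<le> n+1) \<or> i = n+2 \<or> i = n+3 \<or> i = n+4 \<or> i = n+5"
  by presburger
lemma cols: "(j::nat) \<le> n+5 \<Longrightarrow> j \<le> n \<or> j = n+1 \<or> j = n+2 \<or> j = n+3 \<or> j = n+4 \<or> j = n+5"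
  by presburger

lemma stepA: assumes "1 \<le> i" "1 \<le> j" "i+1 \<le> n+5" "j \<le> n+5"
  and n1: "1 \<le> n" shows "g n (i+1) j \<le> g n i j + ind (w n (i+1) j)"
  using rows[OF assms(1), of n] cols[OF assms(4)] assms
  by (elim disjE; auto simp add: g_def w_def ind_def sg_def tg_def max_def)

lemma stepB: assumes "1 \<le> i" "1 \<le> j" "i \<le> n+5" "j+1 \<le> n+5"
  and n1: "1 \<le> n" shows "g n i (j+1) \<le> g n i j + ind (w n i (j+1))"
  using rows[OF assms(1), of n] cols[OF assms(4)] assms
  by (elim disjE; auto simp add: g_def w_def ind_def sg_def tg_def max_def)

lemma stepD: assumes "1 \<le> i" "1 \<le> j" "i+1 \<le> n+5" "j+1 \<le> n+5"
  and n1: "1 \<le> n" shows "g n (i+1) (j+1) \<le> g n i j + ind (w n (i+1) (j+1))"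
  using rows[OF assms(1), of n] cols[OF assms(4)] assms
  by (elim disjE; auto simp add: g_def w_def ind_def sg_def tg_def max_def)

lemma g_blk: "j \<le> n \<Longrightarrow> i \<le> n+2 \<Longrightarrow> g n i j = real (max i j)" by (simp add: g_def)
lemma g_blk3: "j \<le> n \<Longrightarrow> g n (n+3) j = real n + 2" by (simp add: g_def)
lemma g_blk4: "j \<le> n \<Longrightarrow> g n (n+4) j = real n + 3" by (simp add: g_def)
lemma g_blk5: "j \<le> n \<Longrightarrow> g n (n+5) j = real n + 3" by (simp add: g_def)
lemma g_1_1: "i = 1 \<Longrightarrow> g n i (n+1) = real n + 0" by (simp add: g_def)
lemma g_1_2: "i = 1 \<Longrightarrow> g n i (n+2) = real n + 1" by (simp add: g_def)
lemma g_1_3: "i = 1 \<Longrightarrow> g n i (n+3) = real n + 1" by (simp add: g_def)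
lemma g_1_4: "i = 1 \<Longrightarrow> g n i (n+4) = real n + 2" by (simp add: g_def)
lemma g_1_5: "i = 1 \<Longrightarrow> g n i (n+5) = real n + 2" by (simp add: g_def)
lemma g_mid_1: "2 \<le> i \<Longrightarrow> i \<le> n+1 \<Longrightarrow> g n i (n+1) = real n + 1" by (simp add: g_def)
lemma g_mid_2: "2 \<le> i \<Longrightarrow> i \<le> n+1 \<Longrightarrow> g n i (n+2) = real n + 0" by (simp add: g_def)
lemma g_mid_3: "2 \<le> i \<Longrightarrow> i \<le> n+1 \<Longrightarrow> g n i (n+3) = real n + 1" by (simp add: g_def)
lemma g_mid_4: "2 \<le> i \<Longrightarrow> i \<le> n+1 \<Longrightarrow> g n i (n+4) = real n + 1" by (simp add: g_def)
lemma g_mid_5: "2 \<le> i \<Longrightarrow> i \<le> n+1 \<Longrightarrow> g n i (n+5) = real n + 2" by (simp add: g_def)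
lemma g_r2_1: "i = n+2 \<Longrightarrow> g n i (n+1) = real n + 1" by (simp add: g_def)
lemma g_r2_2: "i = n+2 \<Longrightarrow> g n i (n+2) = real n + 1" by (simp add: g_def)
lemma g_r2_3: "i = n+2 \<Longrightarrow> g n i (n+3) = real n + 0" by (simp add: g_def)
lemma g_r2_4: "i = n+2 \<Longrightarrow> g n i (n+4) = real n + 1" by (simp add: g_def)
lemma g_r2_5: "i = n+2 \<Longrightarrow> g n i (n+5) = real n + 1" by (simp add: g_def)
lemma g_r3_1: "i = n+3 \<Longrightarrow> g n i (n+1) = real n + 2" by (simp add: g_def)
lemma g_r3_2: "i = n+3 \<Longrightarrow> g n i (n+2) = real n + 2" by (simp add: g_def)
lemma g_r3_3: "i = n+3 \<Longrightarrow> g n i (n+3) = real n + 1" by (simp add: g_def)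
lemma g_r3_4: "i = n+3 \<Longrightarrow> g n i (n+4) = real n + 1" by (simp add: g_def)
lemma g_r3_5: "i = n+3 \<Longrightarrow> g n i (n+5) = real n + 2" by (simp add: g_def)
lemma g_r4_1: "i = n+4 \<Longrightarrow> g n i (n+1) = real n + 2" by (simp add: g_def)
lemma g_r4_2: "i = n+4 \<Longrightarrow> g n i (n+2) = real n + 3" by (simp add: g_def)
lemma g_r4_3: "i = n+4 \<Longrightarrow> g n i (n+3) = real n + 1" by (simp add: g_def)
lemma g_r4_4: "i = n+4 \<Longrightarrow> g n i (n+4) = real n + 2" by (simp add: g_def)
lemma g_r4_5: "i = n+4 \<Longrightarrow> g n i (n+5) = real n + 1" by (simp add: g_def)
lemma g_r5_1: "i = n+5 \<Longrightarrow> g n i (n+1) = real n + 3" by (simp add: g_def)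
lemma g_r5_2: "i = n+5 \<Longrightarrow> g n i (n+2) = real n + 3" by (simp add: g_def)
lemma g_r5_3: "i = n+5 \<Longrightarrow> g n i (n+3) = real n + 2" by (simp add: g_def)
lemma g_r5_4: "i = n+5 \<Longrightarrow> g n i (n+4) = real n + 2" by (simp add: g_def)
lemma g_r5_5: "i = n+5 \<Longrightarrow> g n i (n+5) = real n + 2" by (simp add: g_def)
lemmas g_tab = g_blk g_blk3 g_blk4 g_blk5 g_1_1 g_1_2 g_1_3 g_1_4 g_1_5 g_mid_1 g_mid_2 g_mid_3 g_mid_4 g_mid_5 g_r2_1 g_r2_2 g_r2_3 g_r2_4 g_r2_5 g_r3_1 g_r3_2 g_r3_3 g_r3_4 g_r3_5 g_r4_1 g_r4_2 g_r4_3 g_r4_4 g_r4_5 g_r5_1 g_r5_2 g_r5_3 g_r5_4 g_r5_5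
lemma sg_1: "sg n 1 = 0" by (simp add: sg_def)
lemma sg_mid: "2 \<le> i \<Longrightarrow> i \<le> n+1 \<Longrightarrow> sg n i = 2" by (simp add: sg_def)
lemma sg_2: "sg n (n+2) = 0" by (simp add: sg_def)
lemma sg_3: "sg n (n+3) = 1" by (simp add: sg_def)
lemma sg_4: "sg n (n+4) = 0" by (simp add: sg_def)
lemma sg_5: "sg n (n+5) = 1" by (simp add: sg_def)
lemma tg_blk: "j \<le> n \<Longrightarrow> tg n j = 1" by (simp add: tg_def)
lemma tg_1: "tg n (n+1) = 0" by (simp add: tg_def)
lemma tg_2: "tg n (n+2) = 2" by (simp add: tg_def)
lemma tg_3: "tg n (n+3) = 0" by (simp add: tg_def)
lemma tg_4: "tg n (n+4) = 2" by (simp add: tg_def)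
lemma tg_5: "tg n (n+5) = 0" by (simp add: tg_def)
lemmas sgtg = sg_1 sg_mid sg_2 sg_3 sg_4 sg_5 tg_blk tg_1 tg_2 tg_3 tg_4 tg_5




definition inS :: "nat \<Rightarrow> nat \<times> nat \<Rightarrow> bool" where
  "inS n q = (case q of (i,j) \<Rightarrow> (i = 1 \<and> 1 \<le> j \<and> j \<le> n+1) \<or> (2 \<le> i \<and> i \<le> n+1 \<and> j = n+2) \<or>
      (i = n+2 \<and> j = n+3) \<or> (i = n+3 \<and> j = n+4) \<or> (i = n+4 \<and> j = n+5) \<or> (i = n+5 \<and> j = n+5))"

definition predT :: "nat \<Rightarrow> nat \<times> nat \<Rightarrow> nat \<times> nat" where
  "predT n q = (case q of (a,b) \<Rightarrow> (if a = 1 then (1, b-1) else if a = 2 \<and> b = n+2 then (1, n+1)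
     else if b = n+2 then (a-1, n+2) else if a = n+2 then (n+1, n+2) else if a = n+3 then (n+2,n+3)
     else if a = n+4 then (n+3,n+4) else (n+4,n+5)))"

lemma predT_inS: assumes "inS n (a,b)" "(a,b) \<noteq> (1,1)" "1 \<le> n" shows "inS n (predT n (a,b))"
proof -
  have "(a = 1 \<and> 1 \<le> b \<and> b \<le> n+1) \<or> (2 \<le> a \<and> a \<le> n+1 \<and> b = n+2) \<or>
      (a = n+2 \<and> b = n+3) \<or> (a = n+3 \<and> b = n+4) \<or> (a = n+4 \<and> b = n+5) \<or> (a = n+5 \<and> b = n+5)"
    using assms(1) by (simp add: inS_def)
  then show ?thesis using assms(2,3) by (elim disjE; simp add: inS_def predT_def; arith)
qed

lemma tight_pred:
  assumes S: "inS n (a,b)" and ne: "(a,b) \<noteq> (1,1)" and st: "trav_step (c,d) (a,b)"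
    and c1: "1 \<le> c" and d1: "1 \<le> d" and n1: "1 \<le> n"
    and t: "g n a b = g n c d + ind (w n a b)"
  shows "(c,d) = predT n (a,b)"
proof -
  have wv: "w n a b = \<bar>sg n a - tg n b\<bar>" by (simp add: w_def)
  from st consider (A) "a = c+1" "b = d" | (B) "a = c" "b = d+1" | (D) "a = c+1" "b = d+1"
    unfolding trav_step_def by auto
  then show ?thesis
  proof cases
    case A
    from S c1 A consider (s2) "2 \<le> a" "a \<le> n+1" "b = n+2" | (s3) "a = n+2" "b = n+3"
      | (s4) "a = n+3" "b = n+4" | (s5) "a = n+4" "b = n+5" | (s6) "a = n+5" "b = n+5"
      unfolding inS_def by auto
    then show ?thesis
    proof cases
      case s2
      show ?thesis
      proof (cases "a = 2")
        case True
        have "g n a b = n" "g n c d = n+1" "w n a b = 0"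
          using True s2 A n1 by (simp_all add: g_def w_def sg_def tg_def)
        then show ?thesis using t by (simp add: ind_def)
      next
        case False
        then show ?thesis using s2 A by (simp add: predT_def)
      qed
    next
      case s3
      have "g n a b = n" "g n c d = n+1" "w n a b = 0"
        using s3 A n1 by (simp_all add: g_def w_def sg_def tg_def)
      then show ?thesis using t by (simp add: ind_def)
    next
      case s4
      have "g n a b = n+1" "g n c d = n+1" "w n a b = 1"
        using s4 A n1 by (simp_all add: g_def w_def sg_def tg_def)
      then show ?thesis using t by (simp add: ind_def)
    next
      case s5
      have "g n a b = n+1" "g n c d = n+2" "w n a b = 0"
        using s5 A n1 by (simp_all add: g_def w_def sg_def tg_def)
      then show ?thesis using t by (simp add: ind_def)
    next
      case s6
      then show ?thesis using A by (simp add: predT_def)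
    qed
  next
    case B
    from S ne B consider (s1) "a = 1" "2 \<le> b" | (s2) "2 \<le> a" "a \<le> n+1" "b = n+2" | (s3) "a = n+2" "b = n+3"
      | (s4) "a = n+3" "b = n+4" | (s5) "a = n+4" "b = n+5" | (s6) "a = n+5" "b = n+5"
      unfolding inS_def by auto
    then show ?thesis
    proof cases
      case s1
      then show ?thesis using B by (simp add: predT_def)
    next
      case s2
      have "g n a b = n" "g n c d = n+1" "w n a b = 0"
        using s2 B n1 by (simp_all add: g_def w_def sg_def tg_def)
      then show ?thesis using t by (simp add: ind_def)
    next
      case s3
      have "g n a b = n" "g n c d = n+1" "w n a b = 0"
        using s3 B n1 by (simp_all add: g_def w_def sg_def tg_def)
      then show ?thesis using t by (simp add: ind_def)
    next
      case s4
      have "g n a b = n+1" "g n c d = n+1" "w n a b = 1"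
        using s4 B n1 by (simp_all add: g_def w_def sg_def tg_def)
      then show ?thesis using t by (simp add: ind_def)
    next
      case s5
      have "g n a b = n+1" "g n c d = n+2" "w n a b = 0"
        using s5 B n1 by (simp_all add: g_def w_def sg_def tg_def)
      then show ?thesis using t by (simp add: ind_def)
    next
      case s6
      have "g n a b = n+2" "g n c d = n+2" "w n a b = 1"
        using s6 B n1 by (simp_all add: g_def w_def sg_def tg_def)
      then show ?thesis using t by (simp add: ind_def)
    qed
  next
    case D
    from S c1 D consider (s2) "2 \<le> a" "a \<le> n+1" "b = n+2" | (s3) "a = n+2" "b = n+3"
      | (s4) "a = n+3" "b = n+4" | (s5) "a = n+4" "b = n+5" | (s6) "a = n+5" "b = n+5"
      unfolding inS_def by auto
    then show ?thesis
    proof cases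
      case s2
      show ?thesis
      proof (cases "a = 2")
        case True
        then show ?thesis using s2 D by (simp add: predT_def)
      next
        case False
        have "g n a b = n" "g n c d = n+1" "w n a b = 0"
          using False s2 D n1 by (simp_all add: g_def w_def sg_def tg_def)
        then show ?thesis using t by (simp add: ind_def)
      qed
    next
      case s3
      then show ?thesis using D by (simp add: predT_def)
    next
      case s4
      then show ?thesis using D by (simp add: predT_def)
    next
      case s5
      then show ?thesis using D by (simp add: predT_def)
    next
      case s6
      have "g n a b = n+2" "g n c d = n+2" "w n a b = 1"
        using s6 D n1 by (simp_all add: g_def w_def sg_def tg_def)
      then show ?thesis using t by (simp add: ind_def)
    qed
  qed
qed



inductive vp :: "(nat \<times> nat) list \<Rightarrow> bool" where
  vp1: "vp [(1,1)]"
| vp2: "vp P \<Longrightarrow> trav_step (last P) q \<Longrightarrow> vp (P @ [q])"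

lemma vp_ne: "vp P \<Longrightarrow> P \<noteq> [] \<and> hd P = (1,1)"
  by (induction rule: vp.induct) auto

lemma vp_steps: "vp P \<Longrightarrow> \<forall>i. i+1 < length P \<longrightarrow> trav_step (P!i) (P!(i+1))"
proof (induction rule: vp.induct)
  case vp1 then show ?case by simp
next
  case (vp2 P q)
  show ?case
  proof (intro allI impI)
    fix i assume i: "i+1 < length (P @ [q])"
    show "trav_step ((P @ [q]) ! i) ((P @ [q]) ! (i + 1))"
    proof (cases "i+1 < length P")
      case True
      then show ?thesis using vp2.IH by (simp add: nth_append)
    next
      case False
      then have "i + 1 = length P" using i by simp
      moreover have "P \<noteq> []" using vp_ne[OF vp2.hyps(1)] by simp
      ultimately have "P ! i = last P" by (metis diff_Suc_1 last_conv_nth Suc_eq_plus1)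
      then show ?thesis using vp2.hyps(2) \<open>i + 1 = length P\<close> by (simp add: nth_append)
    qed
  qed
qed

lemma steps_vp: "P \<noteq> [] \<Longrightarrow> hd P = (1,1) \<Longrightarrow> (\<forall>i. i+1 < length P \<longrightarrow> trav_step (P!i) (P!(i+1))) \<Longrightarrow> vp P"
proof (induction P rule: rev_induct)
  case Nil then show ?case by simp
next
  case (snoc x xs)
  show ?case
  proof (cases "xs = []")
    case True
    then have "xs @ [x] = [(1,1)]" using snoc.prems(2) by simp
    then show ?thesis using vp1 by simp
  next
    case False
    have "\<forall>i. i+1 < length xs \<longrightarrow> trav_step (xs!i) (xs!(i+1))"
    proof (intro allI impI)
      fix i assume "i+1 < length xs"
      then show "trav_step (xs!i) (xs!(i+1))" using snoc.prems(3)[rule_format, of i] by (simp add: nth_append)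
    qed
    then have "vp xs" using snoc.IH False snoc.prems(2) by simp
    moreover have "trav_step (last xs) x"
      using snoc.prems(3)[rule_format, of "length xs - 1"] False
      by (simp add: nth_append last_conv_nth)
    ultimately show ?thesis by (rule vp2)
  qed
qed

lemma trav_vp: "is_traversal \<sigma> \<tau> T \<Longrightarrow> vp T \<and> last T = (length \<sigma>, length \<tau>)"
  unfolding is_traversal_def using steps_vp by blast

lemma vp_trav: "vp T \<Longrightarrow> last T = (length \<sigma>, length \<tau>) \<Longrightarrow> is_traversal \<sigma> \<tau> T"
  unfolding is_traversal_def using vp_ne vp_steps by blast

lemma step_mono: "trav_step p q \<Longrightarrow> fst p \<le> fst q \<and> snd p \<le> snd q \<and> fst p + snd p < fst q + snd q"
  unfolding trav_step_def by auto

lemma vp_bounds: "vp P \<Longrightarrow> x \<in> set P \<Longrightarrow> 1 \<le> fst x \<and> 1 \<le> snd x \<and> fst x \<le> fst (last P) \<and> snd x \<le> snd (last P)"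
proof (induction arbitrary: x rule: vp.induct)
  case vp1 then show ?case by simp
next
  case (vp2 P q)
  have lP: "last P \<in> set P" using vp_ne[OF vp2.hyps(1)] by simp
  have m: "fst (last P) \<le> fst q \<and> snd (last P) \<le> snd q" using step_mono[OF vp2.hyps(2)] by simp
  from vp2.prems consider "x \<in> set P" | "x = q" by auto
  then show ?case
  proof cases
    case 1 then show ?thesis using vp2.IH m by fastforce
  next
    case 2 then show ?thesis using vp2.IH[OF lP] m by auto
  qed
qed

lemma vp_len: "vp P \<Longrightarrow> length P + 1 \<le> fst (last P) + snd (last P)"
proof (induction rule: vp.induct)
  case vp1 then show ?case by simp
next
  case (vp2 P q)
  then show ?case using step_mono[OF vp2.hyps(2)] by simp
qed

lemma vp_last11: "vp P \<Longrightarrow> last P = (1,1) \<Longrightarrow> P = [(1,1)]"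
proof -
  assume v: "vp P" and l: "last P = (1,1)"
  have "length P \<le> 1" using vp_len[OF v] l by simp
  moreover have "P \<noteq> []" "hd P = (1,1)" using vp_ne[OF v] by auto
  ultimately show ?thesis by (cases P) auto
qed

lemma vp_pot:
  fixes G W :: "nat \<times> nat \<Rightarrow> real"
  assumes g11: "G (1,1) \<le> W (1,1)"
    and gstep: "\<And>p q. trav_step p q \<Longrightarrow> 1 \<le> fst p \<Longrightarrow> 1 \<le> snd p \<Longrightarrow> fst q \<le> M \<Longrightarrow> snd q \<le> M \<Longrightarrow> G q \<le> G p + W q"
  shows "vp P \<Longrightarrow> fst (last P) \<le> M \<Longrightarrow> snd (last P) \<le> M \<Longrightarrow> G (last P) \<le> sum_list (map W P)"
proof (induction rule: vp.induct)
  case vp1 then show ?case using g11 by simp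
next
  case (vp2 P q)
  have lP: "last P \<in> set P" using vp_ne[OF vp2.hyps(1)] by simp
  have b: "1 \<le> fst (last P)" "1 \<le> snd (last P)" using vp_bounds[OF vp2.hyps(1) lP] by auto
  have m: "fst (last P) \<le> fst q \<and> snd (last P) \<le> snd q" using step_mono[OF vp2.hyps(2)] by simp
  have "G (last P) \<le> sum_list (map W P)" using vp2.IH vp2.prems m by simp
  moreover have "G q \<le> G (last P) + W q" using gstep[OF vp2.hyps(2) b] vp2.prems by simp
  ultimately show ?case by simp
qed

lemma vp_unique:
  fixes G W :: "nat \<times> nat \<Rightarrow> real"
  assumes g11: "G (1,1) \<le> W (1,1)"
    and gstep: "\<And>p q. trav_step p q \<Longrightarrow> 1 \<le> fst p \<Longrightarrow> 1 \<le> snd p \<Longrightarrow> fst q \<le> M \<Longrightarrow> snd q \<le> M \<Longrightarrow> G q \<le> G p + W q"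
    and tight: "\<And>p q. S q \<Longrightarrow> q \<noteq> (1,1) \<Longrightarrow> trav_step p q \<Longrightarrow> 1 \<le> fst p \<Longrightarrow> 1 \<le> snd p \<Longrightarrow> G q = G p + W q \<Longrightarrow> p = \<pi> q"
    and Spi: "\<And>q. S q \<Longrightarrow> q \<noteq> (1,1) \<Longrightarrow> S (\<pi> q)"
    and Sb: "\<And>q. S q \<Longrightarrow> fst q \<le> M \<and> snd q \<le> M"
  shows "vp P1 \<Longrightarrow> vp P2 \<Longrightarrow> last P1 = last P2 \<Longrightarrow> S (last P1) \<Longrightarrow> sum_list (map W P1) = G (last P1)
     \<Longrightarrow> sum_list (map W P2) = G (last P2) \<Longrightarrow> P1 = P2"
proof (induction arbitrary: P2 rule: vp.induct)
  case vp1
  then show ?case using vp_last11 by simp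
next
  case (vp2 P q)
  have qne: "q \<noteq> (1,1)"
  proof
    assume "q = (1,1)"
    then have "P @ [q] = [(1,1)]" using vp_last11[OF vp.vp2[OF vp2.hyps]] by simp
    then show False using vp_ne[OF vp2.hyps(1)] by simp
  qed
  have Sq: "S q" using vp2.prems by simp
  have key: "\<And>Q. vp Q \<Longrightarrow> trav_step (last Q) q \<Longrightarrow> sum_list (map W (Q @ [q])) = G q
      \<Longrightarrow> last Q = \<pi> q \<and> sum_list (map W Q) = G (last Q)"
  proof -
    fix Q assume vQ: "vp Q" and st: "trav_step (last Q) q" and eq: "sum_list (map W (Q @ [q])) = G q"
    have lQ: "last Q \<in> set Q" using vp_ne[OF vQ] by simp
    have b: "1 \<le> fst (last Q)" "1 \<le> snd (last Q)" using vp_bounds[OF vQ lQ] by auto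
    have m: "fst (last Q) \<le> fst q \<and> snd (last Q) \<le> snd q" using step_mono[OF st] by simp
    have qM: "fst q \<le> M" "snd q \<le> M" using Sb[OF Sq] by auto
    have "G (last Q) \<le> sum_list (map W Q)" using vp_pot[of G W M, OF g11 gstep vQ] m qM by fastforce
    moreover have "G q \<le> G (last Q) + W q" using gstep[OF st b qM] .
    ultimately have e1: "sum_list (map W Q) = G (last Q)" and e2: "G q = G (last Q) + W q"
      using eq by auto
    then show "last Q = \<pi> q \<and> sum_list (map W Q) = G (last Q)" using tight[OF Sq qne st b e2] by simp
  qed
  have A: "last P = \<pi> q" "sum_list (map W P) = G (last P)" using key[OF vp2.hyps(1,2)] vp2.prems by auto
  from vp2.prems(1) show ?case
  proof cases
    case vp1
    then show ?thesis using vp2.prems qne by simp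
  next
    case (vp2 Q q')
    have qq: "q' = q" using vp2.prems(2) vp2(1) by simp
    have B: "last Q = \<pi> q" "sum_list (map W Q) = G (last Q)"
      using key[OF vp2(2)] vp2(3) qq vp2.prems(5) \<open>P2 = Q @ [q']\<close> by auto
    have "P = Q" using vp2.IH[OF vp2(2)] A B Spi[OF Sq qne] by auto
    then show ?thesis using \<open>P2 = Q @ [q']\<close> qq by simp
  qed
qed



lemma sum_ge_len: "(\<forall>x\<in>set ys. h \<le> x) \<Longrightarrow> real (length ys) * h \<le> sum_list (ys::real list)"
  by (induction ys) (auto simp: algebra_simps)

lemma sum_le_len: "(\<forall>x\<in>set ys. x \<le> B) \<Longrightarrow> sum_list (ys::real list) \<le> real (length ys) * B"
  by (induction ys) (auto simp: algebra_simps)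

lemma sorted_dropWhile_filter: "sorted (s::real list) \<Longrightarrow> dropWhile (\<lambda>x. x < h) s = filter (\<lambda>x. h \<le> x) s"
proof (induction s)
  case Nil then show ?case by simp
next
  case (Cons a s)
  show ?case
  proof (cases "a < h")
    case True then show ?thesis using Cons by auto
  next
    case False
    then have "\<forall>x\<in>set s. h \<le> x" using Cons.prems by auto
    then have "filter (\<lambda>x. h \<le> x) s = s" by (simp add: filter_id_conv)
    then show ?thesis using False by simp
  qed
qed

lemma topk_ge:
  fixes xs :: "real list"
  assumes k: "k \<le> length (filter (\<lambda>x. h \<le> x) xs)"
  shows "real k * h \<le> sum_list (take k (rev (sort xs)))"
proof -
  define s where "s = sort xs"
  define D where "D = dropWhile (\<lambda>x. x < h) s"
  have sD: "D = filter (\<lambda>x. h \<le> x) s" unfolding D_def s_def by (rule sorted_dropWhile_filter) simp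
  have lD: "length D = length (filter (\<lambda>x. h \<le> x) xs)"
    unfolding sD s_def by (simp add: filter_sort)
  have "rev s = rev D @ rev (takeWhile (\<lambda>x. x < h) s)"
    unfolding D_def by (metis rev_append takeWhile_dropWhile_id)
  then have tk: "take k (rev s) = take k (rev D)" using k lD by simp
  have len: "length (take k (rev D)) = k" using k lD by simp
  have "\<forall>x\<in>set (take k (rev D)). h \<le> x"
    using sD by (auto dest: in_set_takeD)
  then have "real (length (take k (rev D))) * h \<le> sum_list (take k (rev D))" by (rule sum_ge_len)
  then show ?thesis using tk len s_def by simp
qed

lemma topk_le:
  fixes xs :: "real list"
  assumes "\<forall>x\<in>set xs. x \<le> 1" "\<forall>x\<in>set xs. 0 \<le> x"
  shows "sum_list (take k (rev (sort xs))) \<le> real k"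
proof -
  have "\<forall>x\<in>set (take k (rev (sort xs))). x \<le> 1" using assms(1) by (auto dest: in_set_takeD)
  then have "sum_list (take k (rev (sort xs))) \<le> real (length (take k (rev (sort xs)))) * 1"
    by (rule sum_le_len)
  also have "\<dots> \<le> real k" by simp
  finally show ?thesis .
qed

lemma sum_ind: "sum_list (map ind xs) = real (length (filter (\<lambda>x. 1 \<le> x) xs))"
  by (induction xs) (auto simp: ind_def)

lemma ind_le: "0 \<le> x \<Longrightarrow> ind x \<le> x"
  by (simp add: ind_def)



definition cc :: "nat \<Rightarrow> nat \<times> nat \<Rightarrow> real" where
  "cc n = (\<lambda>(i, j). \<bar>sig n ! (i - 1) - tau n ! (j - 1)\<bar>)"

lemma md: "matched_dists (sig n) (tau n) T = map (cc n) T"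
  by (simp add: matched_dists_def cc_def)

lemma cc_w: "1 \<le> i \<Longrightarrow> i \<le> n+5 \<Longrightarrow> 1 \<le> j \<Longrightarrow> j \<le> n+5 \<Longrightarrow> cc n (i,j) = w n i j"
  using sig_nth[of i n] tau_nth[of j n] by (simp add: cc_def w_def)

lemma len_sig: "length (sig n) = n+5" by (simp add: sig_def)
lemma len_tau: "length (tau n) = n+5" by (simp add: tau_def)

definition GG :: "nat \<Rightarrow> nat \<times> nat \<Rightarrow> real" where "GG n q = g n (fst q) (snd q)"
definition WW :: "nat \<Rightarrow> nat \<times> nat \<Rightarrow> real" where "WW n q = ind (cc n q)"

lemma g11: "1 \<le> n \<Longrightarrow> GG n (1,1) \<le> WW n (1,1)"
  by (simp add: GG_def WW_def cc_w g_def w_def sg_def tg_def ind_def)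

lemma gstep: assumes n1: "1 \<le> n" and st: "trav_step p q" and p1: "1 \<le> fst p" "1 \<le> snd p"
  and qb: "fst q \<le> n+5" "snd q \<le> n+5"
  shows "GG n q \<le> GG n p + WW n q"
proof -
  obtain i j where p: "p = (i,j)" by (cases p)
  from st consider "q = (i+1,j)" | "q = (i,j+1)" | "q = (i+1,j+1)" unfolding trav_step_def p by auto
  then show ?thesis
  proof cases
    case 1
    then show ?thesis using stepA[of i j n] p1 qb n1 cc_w[of "i+1" n j] by (simp add: p GG_def WW_def)
  next
    case 2
    then show ?thesis using stepB[of i j n] p1 qb n1 cc_w[of i n "j+1"] by (simp add: p GG_def WW_def)
  next
    case 3
    then show ?thesis using stepD[of i j n] p1 qb n1 cc_w[of "i+1" n "j+1"] by (simp add: p GG_def WW_def)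
  qed
qed

lemma inS_b: "inS n q \<Longrightarrow> 1 \<le> fst q \<and> 1 \<le> snd q \<and> fst q \<le> n+5 \<and> snd q \<le> n+5"
  by (auto simp: inS_def split: prod.splits)

lemma tight: assumes n1: "1 \<le> n" and S: "inS n q" and ne: "q \<noteq> (1,1)" and st: "trav_step p q"
  and p1: "1 \<le> fst p" "1 \<le> snd p" and t: "GG n q = GG n p + WW n q"
  shows "p = predT n q"
proof -
  obtain a b where q: "q = (a,b)" by (cases q)
  obtain c d where p: "p = (c,d)" by (cases p)
  have b: "1 \<le> a" "a \<le> n+5" "1 \<le> b" "b \<le> n+5" using inS_b[OF S] q by auto
  have "g n a b = g n c d + ind (w n a b)" using t cc_w[OF b] by (simp add: GG_def WW_def p q)
  then show ?thesis using tight_pred[of n a b c d] S ne st p1 n1 by (simp add: p q)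
qed

lemma Spi: "1 \<le> n \<Longrightarrow> inS n q \<Longrightarrow> q \<noteq> (1,1) \<Longrightarrow> inS n (predT n q)"
  using predT_inS[of n "fst q" "snd q"] by simp

lemma map_const: "(\<forall>x\<in>set xs. f x = c) \<Longrightarrow> map f xs = replicate (length xs) c"
  by (induction xs) auto

definition Tstar :: "nat \<Rightarrow> (nat \<times> nat) list" where
  "Tstar n = map (\<lambda>j. (1,j)) [1..<n+1] @ [(1,n+1)] @ map (\<lambda>i. (i,n+2)) [2..<n+2]
     @ [(n+2,n+3),(n+3,n+4),(n+4,n+5),(n+5,n+5)]"

definition T0 :: "nat \<Rightarrow> (nat \<times> nat) list" where
  "T0 n = (1,1) # map (\<lambda>i. (i+1, i)) [1..<n+5] @ [(n+5,n+5)]"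

lemma vp_row: "vp (map (\<lambda>j. (1::nat,j)) [1..<k+2])"
proof (induction k)
  case 0 then show ?case using vp1 by simp
next
  case (Suc k)
  have e: "[1..<Suc k + 2] = [1..<k+2] @ [k+2]" by simp
  have "trav_step (last (map (\<lambda>j. (1::nat,j)) [1..<k+2])) (1, k+2)"
    by (simp add: trav_step_def)
  then have "vp (map (\<lambda>j. (1::nat,j)) [1..<k+2] @ [(1,k+2)])" using Suc vp2 by blast
  then show ?case using e by simp
qed

lemma vp_col: "l \<le> n \<Longrightarrow> vp (map (\<lambda>j. (1::nat,j)) [1..<n+2] @ map (\<lambda>i. (i,n+2)) [2..<l+2])"
proof (induction l)
  case 0 then show ?case using vp_row[of n] by simp
next
  case (Suc l)
  let ?R = "map (\<lambda>j. (1::nat,j)) [1..<n+2] @ map (\<lambda>i. (i,n+2)) [2..<l+2]"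
  have e: "[2..<Suc l + 2] = [2..<l+2] @ [l+2]" by simp
  have "trav_step (last ?R) (l+2, n+2)"
  proof (cases l)
    case 0 then show ?thesis by (simp add: trav_step_def)
  next
    case (Suc l') then show ?thesis by (simp add: trav_step_def)
  qed
  moreover have "vp ?R" using Suc by simp
  ultimately have "vp (?R @ [(l+2, n+2)])" using vp2 by blast
  moreover have "map (\<lambda>i. (i,n+2)) [2..<Suc l + 2] = map (\<lambda>i. (i,n+2)) [2..<l+2] @ [(l+2,n+2)]"
    using e by simp
  ultimately show ?case by (metis append_assoc)
qed

lemma vp_Tstar: "1 \<le> n \<Longrightarrow> vp (Tstar n)"
proof -
  assume n1: "1 \<le> n"
  let ?R = "map (\<lambda>j. (1::nat,j)) [1..<n+2] @ map (\<lambda>i. (i,n+2)) [2..<n+2]"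
  have v0: "vp ?R" using vp_col[of n n] by simp
  have ne: "[2..<n+2] \<noteq> []" using n1 by simp
  have "last [2..<n+2] = n+1" using n1 by (simp add: last_upt)
  then have l0: "last ?R = (n+1, n+2)" using ne by (simp add: last_map)
  have v1: "vp (?R @ [(n+2,n+3)])" using vp2[OF v0] l0 by (simp add: trav_step_def)
  have v2: "vp ((?R @ [(n+2,n+3)]) @ [(n+3,n+4)])" using vp2[OF v1] by (simp add: trav_step_def)
  have v3: "vp (((?R @ [(n+2,n+3)]) @ [(n+3,n+4)]) @ [(n+4,n+5)])" using vp2[OF v2] by (simp add: trav_step_def)
  have v4: "vp ((((?R @ [(n+2,n+3)]) @ [(n+3,n+4)]) @ [(n+4,n+5)]) @ [(n+5,n+5)])" using vp2[OF v3] by (simp add: trav_step_def)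
  have e: "map (\<lambda>j. (1::nat,j)) [1..<n+2] = map (\<lambda>j. (1,j)) [1..<n+1] @ [(1,n+1)]" by simp
  have "Tstar n = (((?R @ [(n+2,n+3)]) @ [(n+3,n+4)]) @ [(n+4,n+5)]) @ [(n+5,n+5)]"
    unfolding Tstar_def e by (simp only: append_assoc append_Cons append_Nil)
  then show ?thesis using v4 by simp
qed

lemma last_Tstar: "last (Tstar n) = (n+5,n+5)" by (simp add: Tstar_def)
lemma len_Tstar: "length (Tstar n) = 2*n+5" by (simp add: Tstar_def del: upt_Suc)

lemma map_cc_Tstar: assumes n1: "1 \<le> n"
  shows "map (cc n) (Tstar n) = replicate n 1 @ [0] @ replicate n 0 @ [0,1,0,1]"
proof -
  have a: "map (cc n) (map (\<lambda>j. (1,j)) [1..<n+1]) = replicate n 1"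
  proof -
    have "\<forall>x\<in>set [1..<n+1]. (cc n \<circ> (\<lambda>j. (1,j))) x = 1"
      by (auto simp: cc_w w_def sg_def tg_def)
    then show ?thesis using map_const[of "[1..<n+1]" "cc n \<circ> (\<lambda>j. (1,j))" 1] by (simp del: upt_Suc)
  qed
  have b: "map (cc n) (map (\<lambda>i. (i,n+2)) [2..<n+2]) = replicate n 0"
  proof -
    have "\<forall>x\<in>set [2..<n+2]. (cc n \<circ> (\<lambda>i. (i,n+2))) x = 0"
      by (auto simp: cc_w w_def sg_def tg_def)
    then show ?thesis using map_const[of "[2..<n+2]" "cc n \<circ> (\<lambda>i. (i,n+2))" 0] by (simp del: upt_Suc)
  qed
  have c: "cc n (1,n+1) = 0" "cc n (n+2,n+3) = 0" "cc n (n+3,n+4) = 1" "cc n (n+4,n+5) = 0" "cc n (n+5,n+5) = 1"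
    using n1 by (simp_all add: cc_w w_def sg_def tg_def)
  show ?thesis using a b c by (simp add: Tstar_def)
qed

lemma vp_T0pre: "k \<le> n+4 \<Longrightarrow> vp ((1,1) # map (\<lambda>i. (i+1, i)) [1..<k+1])"
proof (induction k)
  case 0 then show ?case using vp1 by simp
next
  case (Suc k)
  let ?R = "(1::nat,1::nat) # map (\<lambda>i. (i+1, i)) [1..<k+1]"
  have e: "[1..<Suc k + 1] = [1..<k+1] @ [k+1]" by simp
  have "trav_step (last ?R) (k+2, k+1)"
  proof (cases k)
    case 0 then show ?thesis by (simp add: trav_step_def)
  next
    case (Suc l') then show ?thesis by (simp add: trav_step_def)
  qed
  moreover have "vp ?R" using Suc by simp
  ultimately have "vp (?R @ [(k+2, k+1)])" using vp2 by blast
  moreover have "map (\<lambda>i. (i+1, i)) [1..<Suc k + 1] = map (\<lambda>i. (i+1, i)) [1..<k+1] @ [(k+2,k+1)]"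
    using e by simp
  ultimately show ?case by (metis append_Cons)
qed

lemma vp_T0: "vp (T0 n)"
proof -
  let ?R = "(1::nat,1::nat) # map (\<lambda>i. (i+1, i)) [1..<n+5]"
  have "vp ((1,1) # map (\<lambda>i. (i+1, i)) [1..<(n+4)+1])" by (rule vp_T0pre[of "n+4" n]) simp
  moreover have "(n+4)+1 = n+5" by simp
  ultimately have v: "vp ?R" by metis
  have "last ?R = (n+5, n+4)" by (simp add: last_map last_upt del: upt_Suc)
  then have "vp (?R @ [(n+5,n+5)])" using vp2[OF v] by (simp add: trav_step_def)
  then show ?thesis by (simp add: T0_def)
qed

lemma last_T0: "last (T0 n) = (n+5,n+5)" by (simp add: T0_def)
lemma len_T0: "length (T0 n) = n+6" by (simp add: T0_def)

lemma T0_le1: assumes n1: "1 \<le> n" shows "\<forall>x\<in>set (map (cc n) (T0 n)). x \<le> 1"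
proof -
  have "cc n (i+1, i) \<le> 1" if "1 \<le> i" "i \<le> n+4" for i
  proof -
    have "cc n (i+1,i) = w n (i+1) i" using that by (simp add: cc_w)
    moreover have "w n (i+1) i \<le> 1"
      using that rows[of "i+1" n] by (auto simp: w_def sg_def tg_def)
    ultimately show ?thesis by simp
  qed
  moreover have "cc n (1,1) \<le> 1" "cc n (n+5,n+5) \<le> 1"
    using n1 by (simp_all add: cc_w w_def sg_def tg_def)
  ultimately show ?thesis by (auto simp: T0_def)
qed



lemma trav_props: assumes "is_traversal (sig n) (tau n) T" shows "vp T" "last T = (n+5,n+5)"
  using trav_vp[OF assms] len_sig len_tau by auto

lemma count_lb: assumes n1: "1 \<le> n" and tr: "is_traversal (sig n) (tau n) T"
  shows "real n + 2 \<le> sum_list (map (WW n) T)"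
proof -
  have "GG n (last T) \<le> sum_list (map (WW n) T)"
    using vp_pot[of "GG n" "WW n" "n+5", OF g11[OF n1] gstep[OF n1] trav_props(1)[OF tr]] trav_props(2)[OF tr]
    by simp
  moreover have "GG n (last T) = real n + 2" using trav_props(2)[OF tr] by (simp add: GG_def g_def)
  ultimately show ?thesis by simp
qed

lemma cost_ge_count: "sum_list (map (WW n) T) \<le> dtw_cost (sig n) (tau n) T"
proof -
  have "sum_list (map (WW n) T) \<le> sum_list (map (cc n) T)"
    by (rule sum_list_mono) (simp add: WW_def ind_le cc_def split: prod.splits)
  then show ?thesis by (simp add: dtw_cost_def md)
qed

lemma count_filter: "sum_list (map (WW n) T) = real (length (filter (\<lambda>x. 1 \<le> x) (matched_dists (sig n) (tau n) T)))"
proof -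
  have "map (WW n) T = map (ind \<circ> cc n) T" by (rule map_cong) (simp_all add: WW_def)
  then have "sum_list (map (WW n) T) = sum_list (map ind (map (cc n) T))" by (simp only: map_map)
  also have "\<dots> = real (length (filter (\<lambda>x. 1 \<le> x) (map (cc n) T)))" by (rule sum_ind)
  finally show ?thesis by (simp only: md)
qed

lemma finite_trav: "finite {T. is_traversal (sig n) (tau n) T}"
proof -
  have "{T. is_traversal (sig n) (tau n) T} \<subseteq> {xs. set xs \<subseteq> {1..n+5} \<times> {1..n+5} \<and> length xs \<le> 2*n+10}"
  proof
    fix T assume "T \<in> {T. is_traversal (sig n) (tau n) T}"
    then have tr: "is_traversal (sig n) (tau n) T" by simp
    have v: "vp T" and l: "last T = (n+5,n+5)" using trav_props[OF tr] by auto
    have "set T \<subseteq> {1..n+5} \<times> {1..n+5}"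
    proof
      fix x assume "x \<in> set T"
      then have "1 \<le> fst x \<and> 1 \<le> snd x \<and> fst x \<le> fst (last T) \<and> snd x \<le> snd (last T)"
        by (rule vp_bounds[OF v])
      then show "x \<in> {1..n+5} \<times> {1..n+5}" using l by (cases x) auto
    qed
    moreover have "length T \<le> 2*n+10" using vp_len[OF v] l by simp
    ultimately show "T \<in> {xs. set xs \<subseteq> {1..n+5} \<times> {1..n+5} \<and> length xs \<le> 2*n+10}" by simp
  qed
  moreover have "finite {xs. set xs \<subseteq> {1..n+5} \<times> {1..n+5} \<and> length xs \<le> 2*n+10}"
    by (rule finite_lists_length_le) simp
  ultimately show ?thesis by (rule finite_subset)
qed

lemma finite_img: "finite {f T |T. is_traversal (sig n) (tau n) T}"
proof -
  have "{f T |T. is_traversal (sig n) (tau n) T} = f ` {T. is_traversal (sig n) (tau n) T}" by auto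
  then show ?thesis using finite_trav by simp
qed

lemma Tstar_trav: "1 \<le> n \<Longrightarrow> is_traversal (sig n) (tau n) (Tstar n)"
  using vp_trav[OF vp_Tstar] last_Tstar len_sig len_tau by simp

lemma T0_trav: "is_traversal (sig n) (tau n) (T0 n)"
  using vp_trav[OF vp_T0] last_T0 len_sig len_tau by simp

lemma dtw_Tstar: "1 \<le> n \<Longrightarrow> dtw_cost (sig n) (tau n) (Tstar n) = real n + 2"
  by (simp add: dtw_cost_def md map_cc_Tstar sum_list_replicate)

lemma count_Tstar: "1 \<le> n \<Longrightarrow> sum_list (map (WW n) (Tstar n)) = real n + 2"
proof -
  assume n1: "1 \<le> n"
  have "map (WW n) (Tstar n) = map ind (map (cc n) (Tstar n))" by (simp add: WW_def)
  also have "\<dots> = map ind (replicate n 1 @ [0] @ replicate n 0 @ [0,1,0,1])" using map_cc_Tstar[OF n1] by simp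
  finally have eq: "map (WW n) (Tstar n) = map ind (replicate n 1 @ [0] @ replicate n 0 @ [0,1,0,1])" .
  show ?thesis unfolding eq by (simp add: ind_def sum_list_replicate)
qed

lemma dDTW: assumes n1: "1 \<le> n" shows "d_DTW (sig n) (tau n) = real n + 2"
  unfolding d_DTW_def
proof (rule Min_eqI)
  show "finite {dtw_cost (sig n) (tau n) T |T. is_traversal (sig n) (tau n) T}" by (rule finite_img)
next
  fix y assume "y \<in> {dtw_cost (sig n) (tau n) T |T. is_traversal (sig n) (tau n) T}"
  then obtain T where tr: "is_traversal (sig n) (tau n) T" and y: "y = dtw_cost (sig n) (tau n) T" by auto
  show "real n + 2 \<le> y" using count_lb[OF n1 tr] cost_ge_count[of n T] y by simp
next
  show "real n + 2 \<in> {dtw_cost (sig n) (tau n) T |T. is_traversal (sig n) (tau n) T}"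
    using Tstar_trav[OF n1] dtw_Tstar[OF n1] by force
qed

lemma uniqueT: assumes n1: "1 \<le> n" and r: "realizes_DTW (sig n) (tau n) T" shows "T = Tstar n"
proof -
  have tr: "is_traversal (sig n) (tau n) T" and c: "dtw_cost (sig n) (tau n) T = real n + 2"
    using r dDTW[OF n1] by (auto simp: realizes_DTW_def)
  have cnt: "sum_list (map (WW n) T) = GG n (last T)"
    using count_lb[OF n1 tr] cost_ge_count[of n T] c trav_props(2)[OF tr] by (simp add: GG_def g_def)
  have cnt2: "sum_list (map (WW n) (Tstar n)) = GG n (last (Tstar n))"
    using count_Tstar[OF n1] last_Tstar by (simp add: GG_def g_def)
  have S: "inS n (last T)" using trav_props(2)[OF tr] by (simp add: inS_def)
  have Sb: "\<And>q. inS n q \<Longrightarrow> fst q \<le> n+5 \<and> snd q \<le> n+5" using inS_b by blast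
  have l: "last T = last (Tstar n)" using trav_props(2)[OF tr] last_Tstar by simp
  show ?thesis
  proof (rule vp_unique[where G="GG n" and W="WW n" and M="n+5" and S="inS n" and \<pi>="predT n"])
    show "GG n (1,1) \<le> WW n (1,1)" by (rule g11[OF n1])
    show "\<And>p q. trav_step p q \<Longrightarrow> 1 \<le> fst p \<Longrightarrow> 1 \<le> snd p \<Longrightarrow> fst q \<le> n+5 \<Longrightarrow> snd q \<le> n+5
      \<Longrightarrow> GG n q \<le> GG n p + WW n q" by (rule gstep[OF n1])
    show "\<And>p q. inS n q \<Longrightarrow> q \<noteq> (1,1) \<Longrightarrow> trav_step p q \<Longrightarrow> 1 \<le> fst p \<Longrightarrow> 1 \<le> snd p
      \<Longrightarrow> GG n q = GG n p + WW n q \<Longrightarrow> p = predT n q" by (rule tight[OF n1])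
    show "\<And>q. inS n q \<Longrightarrow> q \<noteq> (1,1) \<Longrightarrow> inS n (predT n q)" by (rule Spi[OF n1])
    show "\<And>q. inS n q \<Longrightarrow> fst q \<le> n+5 \<and> snd q \<le> n+5" by (rule Sb)
    show "vp T" by (rule trav_props(1)[OF tr])
    show "vp (Tstar n)" by (rule vp_Tstar[OF n1])
    show "last T = last (Tstar n)" by (rule l)
    show "inS n (last T)" by (rule S)
    show "sum_list (map (WW n) T) = GG n (last T)" by (rule cnt)
    show "sum_list (map (WW n) (Tstar n)) = GG n (last (Tstar n))" by (rule cnt2)
  qed
qed

lemma kdtw_lb: assumes n1: "1 \<le> n" and tr: "is_traversal (sig n) (tau n) T" and k: "k \<le> n+2"
  shows "real k \<le> kdtw_cost k (sig n) (tau n) T"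
proof -
  have "real n + 2 \<le> real (length (filter (\<lambda>x. 1 \<le> x) (matched_dists (sig n) (tau n) T)))"
    using count_lb[OF n1 tr] count_filter[of n T] by simp
  then have "k \<le> length (filter (\<lambda>x. 1 \<le> x) (matched_dists (sig n) (tau n) T))" using k by linarith
  from topk_ge[OF this] show ?thesis by (simp add: kdtw_cost_def)
qed

lemma kdtw_T0: assumes n1: "1 \<le> n" and k: "k \<le> n+2"
  shows "kdtw_cost k (sig n) (tau n) (T0 n) = real k"
proof -
  have "kdtw_cost k (sig n) (tau n) (T0 n) \<le> real k"
    unfolding kdtw_cost_def md
    by (rule topk_le) (use T0_le1[OF n1] in \<open>auto simp: cc_def split: prod.splits\<close>)
  moreover have "real k \<le> kdtw_cost k (sig n) (tau n) (T0 n)" using kdtw_lb[OF n1 T0_trav k] .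
  ultimately show ?thesis by simp
qed

lemma dkDTW: assumes n1: "1 \<le> n" and k: "k \<le> n+2" shows "d_kDTW k (sig n) (tau n) = real k"
  unfolding d_kDTW_def
proof (rule Min_eqI)
  show "finite {kdtw_cost k (sig n) (tau n) T |T. is_traversal (sig n) (tau n) T}" by (rule finite_img)
next
  fix y assume "y \<in> {kdtw_cost k (sig n) (tau n) T |T. is_traversal (sig n) (tau n) T}"
  then obtain T where tr: "is_traversal (sig n) (tau n) T" and y: "y = kdtw_cost k (sig n) (tau n) T" by auto
  show "real k \<le> y" using kdtw_lb[OF n1 tr k] y by simp
next
  show "real k \<in> {kdtw_cost k (sig n) (tau n) T |T. is_traversal (sig n) (tau n) T}"
    using T0_trav kdtw_T0[OF n1 k] by force
qed

theorem lemmaA5: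
  shows "\<exists>M::nat. \<forall>m\<ge>M. \<exists>\<sigma> \<tau> :: real list.
     length \<sigma> = m \<and> length \<tau> = m \<and>
     (\<exists>T. realizes_DTW \<sigma> \<tau> T \<and> length T = 2 * m - 5 \<and>
          (\<forall>T'. realizes_DTW \<sigma> \<tau> T' \<longrightarrow> T' = T)) \<and>
     (\<forall>k. 1 \<le> k \<and> k \<le> m - 3 \<longrightarrow> (\<exists>T. realizes_kDTW k \<sigma> \<tau> T \<and> length T = m + 1))"
proof (rule exI[of _ 6], intro allI impI)
  fix m :: nat assume m6: "6 \<le> m"
  define n where "n = m - 5"
  have mn: "m = n + 5" and n1: "1 \<le> n" using m6 by (auto simp: n_def)
  have P1: "realizes_DTW (sig n) (tau n) (Tstar n)"
    using Tstar_trav[OF n1] dtw_Tstar[OF n1] dDTW[OF n1] by (simp add: realizes_DTW_def)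
  have P2: "length (Tstar n) = 2 * m - 5" using len_Tstar mn by simp
  have P3: "\<forall>T'. realizes_DTW (sig n) (tau n) T' \<longrightarrow> T' = Tstar n" using uniqueT[OF n1] by blast
  have P4: "\<forall>k. 1 \<le> k \<and> k \<le> m - 3 \<longrightarrow> (\<exists>T. realizes_kDTW k (sig n) (tau n) T \<and> length T = m + 1)"
  proof (intro allI impI)
    fix k assume "1 \<le> k \<and> k \<le> m - 3"
    then have k: "k \<le> n+2" using mn by simp
    have "realizes_kDTW k (sig n) (tau n) (T0 n)"
      using T0_trav kdtw_T0[OF n1 k] dkDTW[OF n1 k] by (simp add: realizes_kDTW_def)
    moreover have "length (T0 n) = m + 1" using len_T0 mn by simp
    ultimately show "\<exists>T. realizes_kDTW k (sig n) (tau n) T \<and> length T = m + 1" by blast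
  qed
  show "\<exists>\<sigma> \<tau> :: real list.
     length \<sigma> = m \<and> length \<tau> = m \<and>
     (\<exists>T. realizes_DTW \<sigma> \<tau> T \<and> length T = 2 * m - 5 \<and>
          (\<forall>T'. realizes_DTW \<sigma> \<tau> T' \<longrightarrow> T' = T)) \<and>
     (\<forall>k. 1 \<le> k \<and> k \<le> m - 3 \<longrightarrow> (\<exists>T. realizes_kDTW k \<sigma> \<tau> T \<and> length T = m + 1))"
    using P1 P2 P3 P4 len_sig len_tau mn by blast
qed


end
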